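(* Let $F$ be an algebraically closed field with $\mathrm{char}\,F\ne2$. Then the maximal Mathieu subspaces of $M_2(F)$ are exactly the following: (i) $I_2^\perp=\{b\in M_2(F):\mathrm{Tr}(b)=0\}$; (ii) the subspaces $F(\lambda_1e_1+\lambda_2e_2)+e_1M_2(F)e_2$, where $e_1,e_2$ are nonzero idempotents with $e_1+e_2=I_2$ and $\lambda_1,\lambda_2\in F$ are distinct, nonzero, with $\lambda_1+\lambda_2\ne0$; (iii) the subspaces $F(I_2+c)$ with $c\in M_2(F)$ nonzero and nilpotent.
   Context: Let $\mathcal A$ be an associative algebra over a field $F$. An $F$-subspace $M\subseteq\mathcal A$ is a Mathieu subspace (MS) of $\mathcal A$ if for all $a,b,c\in\mathcal A$ such that $a^m\in M$ for all $m\ge 1$, there exists $N$ (depending on $a,b,c$) such that $ba^mc\in M$ for all $m\ge N$. A maximal MS of $\mathcal A$ is a proper MS of $\mathcal A$ that is not properly contained in any proper MS of $\mathcal A$. *)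

theory Defs
  imports "HOL-Analysis.Analysis" "HOL-Computational_Algebra.Polynomial"
begin

text \<open>2x2 matrices over a field F are modelled as the type F^2^2 with matrix product **
  (note: the built-in times on vec is componentwise, so we define matrix powers explicitly).\<close>

type_synonym 'a mat2 = "'a^2^2"

definition msmult :: "'a::field \<Rightarrow> 'a mat2 \<Rightarrow> 'a mat2" where
  "msmult c A = (\<chi> i j. c * A $ i $ j)"

primrec mpow :: "'a::field mat2 \<Rightarrow> nat \<Rightarrow> 'a mat2" where
  "mpow A 0 = mat 1"
| "mpow A (Suc n) = A ** mpow A n"

definition is_subspace2 :: "'a::field mat2 set \<Rightarrow> bool" where
  "is_subspace2 M \<longleftrightarrow> 0 \<in> M \<and> (\<forall>x\<in>M. \<forall>y\<in>M. x + y \<in> M) \<and>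
     (\<forall>c x. x \<in> M \<longrightarrow> msmult c x \<in> M)"

definition mathieu_subspace2 :: "'a::field mat2 set \<Rightarrow> bool" where
  "mathieu_subspace2 M \<longleftrightarrow> is_subspace2 M \<and>
     (\<forall>a b c. (\<forall>m\<ge>1. mpow a m \<in> M) \<longrightarrow> (\<exists>N. \<forall>m\<ge>N. b ** mpow a m ** c \<in> M))"

definition maximal_mathieu_subspace2 :: "'a::field mat2 set \<Rightarrow> bool" where
  "maximal_mathieu_subspace2 M \<longleftrightarrow> mathieu_subspace2 M \<and> M \<noteq> UNIV \<and>
     (\<forall>M'. mathieu_subspace2 M' \<and> M' \<noteq> UNIV \<and> M \<subseteq> M' \<longrightarrow> M' = M)"

definition idempotent2 :: "'a::field mat2 \<Rightarrow> bool" where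
  "idempotent2 e \<longleftrightarrow> e ** e = e"

definition nilpotent2 :: "'a::field mat2 \<Rightarrow> bool" where
  "nilpotent2 c \<longleftrightarrow> (\<exists>k. mpow c k = 0)"

end

theory Submission
  imports Defs
begin


lemma mm_entry: "((x::'a::field mat2) ** y) $ i $ j = x$i$1*y$1$j + x$i$2*y$2$j"
  by (simp add: matrix_matrix_mult_def sum_2)
lemma tr2: "trace (x::'a::field mat2) = x$1$1 + x$2$2"
  by (simp add: trace_def sum_2)
lemma meq: "((x::'a::field mat2) = y) \<longleftrightarrow> x$1$1=y$1$1 \<and> x$1$2=y$1$2 \<and> x$2$1=y$2$1 \<and> x$2$2=y$2$2"
  by (auto simp: vec_eq_iff forall_2)
lemma ms_ent[simp]: "msmult c A $ i $ j = c * A $ i $ j"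
  by (simp add: msmult_def)
lemma mat_ent: "(mat k :: 'a::field mat2) $ i $ j = (if i = j then k else 0)"
  by (simp add: mat_def)

lemmas ent = mm_entry tr2 det_2 mat_ent meq

lemma ms_mm_l: "msmult c (A::'a::field mat2) ** (B::'a mat2) = msmult c (A ** B)"
  unfolding meq by (simp add: ent algebra_simps)
lemma ms_mm_r: "(A::'a::field mat2) ** msmult c (B::'a mat2) = msmult c (A ** B)"
  unfolding meq by (simp add: ent algebra_simps)
lemma ms_ms: "msmult c (msmult d (A::'a::field mat2)) = msmult (c*d) A"
  unfolding meq by (simp add: ent algebra_simps)
lemma ms_add: "msmult c ((A::'a::field mat2) + B) = msmult c A + msmult c B"
  unfolding meq by (simp add: ent algebra_simps)
lemma ms_diff: "msmult c ((A::'a::field mat2) - B) = msmult c A - msmult c B"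
  unfolding meq by (simp add: ent algebra_simps)
lemma ms_one[simp]: "msmult 1 (A::'a::field mat2) = A"
  by (simp add: ent)
lemma ms_zero[simp]: "msmult 0 (A::'a::field mat2) = 0" "msmult c (0::'a::field mat2) = 0"
  by (simp_all add: ent)
lemma tr_ms: "trace (msmult c (A::'a::field mat2)) = c * trace A"
  by (simp add: ent algebra_simps)
lemma mm_rdistrib: "((A::'a::field mat2) + B) ** (C::'a mat2) = A ** C + B ** C"
  unfolding meq by (simp add: ent algebra_simps)
lemma mm_ldiff: "(A::'a::field mat2) ** ((B::'a mat2) - C) = A ** B - A ** C"
  unfolding meq by (simp add: ent algebra_simps)
lemma mm_rdiff: "((A::'a::field mat2) - B) ** (C::'a mat2) = A ** C - B ** C"
  unfolding meq by (simp add: ent algebra_simps)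
lemma tr_comm: "trace ((A::'a::field mat2) ** (B::'a mat2)) = trace (B ** A)"
  by (simp add: ent algebra_simps)

lemma sub_zero: "is_subspace2 M \<Longrightarrow> 0 \<in> M" by (simp add: is_subspace2_def)
lemma sub_add: "is_subspace2 M \<Longrightarrow> x \<in> M \<Longrightarrow> y \<in> M \<Longrightarrow> x + y \<in> M" by (simp add: is_subspace2_def)
lemma sub_sm: "is_subspace2 M \<Longrightarrow> x \<in> M \<Longrightarrow> msmult c x \<in> M" by (simp add: is_subspace2_def)
lemma sub_diff: "is_subspace2 (M::'a::field mat2 set) \<Longrightarrow> x \<in> M \<Longrightarrow> y \<in> M \<Longrightarrow> x - y \<in> M"
proof -
  assume a: "is_subspace2 M" "x \<in> M" "y \<in> M"
  have "x - y = x + msmult (-1) y" by (simp add: ent)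
  thus ?thesis using a sub_add sub_sm by metis
qed

lemma quad_root:
  fixes c0 c1 c2 :: "'a::alg_closed_field"
  assumes "c1 \<noteq> 0 \<or> c2 \<noteq> 0"
  shows "\<exists>x. c0 + c1*x + c2*x^2 = 0"
proof (cases "c2 = 0")
  case True
  with assms have "c1 \<noteq> 0" by auto
  with True show ?thesis by (intro exI[of _ "-c0/c1"]) (simp add: field_simps)
next
  case False
  define f where "f = (\<lambda>k::nat. if k = 0 then c0 else if k = 1 then c1 else c2)"
  have "\<exists>x. (\<Sum>k\<le>2. f k * x ^ k) = 0" using False by (intro alg_closed) (auto simp: f_def)
  then show ?thesis by (simp add: f_def numeral_2_eq_2 power2_eq_square algebra_simps)
qed

lemma idem_cases:
  fixes z :: "'a::field mat2"
  assumes "idempotent2 z"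
  shows "z = 0 \<or> z = mat 1 \<or> (trace z = 1 \<and> det z = 0)"
proof -
  obtain a b c d where ab: "a = z$1$1" "b = z$1$2" "c = z$2$1" "d = z$2$2" by blast
  have e: "a*a + b*c = a" "a*b + b*d = b" "c*a+d*c = c" "c*b+d*d = d"
    using assms unfolding idempotent2_def by (simp_all add: ent ab)
  show ?thesis
  proof (cases "a + d = 1")
    case True
    have "a*d - b*c = a*(a+d-1) - (a*a+b*c-a)" by (simp add: algebra_simps)
    hence "a*d - b*c = 0" using e True by simp
    thus ?thesis using True by (simp add: ent ab)
  next
    case False
    have "b * (a+d-1) = (a*b+b*d) - b" "c*(a+d-1) = (c*a+d*c) - c" by (simp_all add: algebra_simps)
    hence "b * (a+d-1) = 0" "c*(a+d-1) = 0" using e by simp_all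
    hence bc: "b = 0" "c = 0" using False by auto
    have "a*(a-1) = (a*a + b*c) - a" "d*(d-1) = (c*b+d*d) - d" using bc by (simp_all add: algebra_simps)
    hence "a*(a-1) = 0" "d*(d-1) = 0" using e by simp_all
    hence "(a = 0 \<or> a = 1) \<and> (d = 0 \<or> d = 1)" by auto
    with False have "(a = 0 \<and> d = 0) \<or> (a = 1 \<and> d = 1)" by auto
    thus ?thesis using bc by (auto simp: ent ab)
  qed
qed

definition avoid :: "'a::field mat2 set \<Rightarrow> bool" where
  "avoid M \<longleftrightarrow> (\<forall>x\<in>M. idempotent2 x \<longrightarrow> x = 0)"

lemma idem_scale:
  fixes w :: "'a::field mat2"
  assumes "w ** w = msmult k w" "k \<noteq> 0" "trace w \<noteq> 0"
  shows "idempotent2 (msmult (1/k) w)" "msmult (1/k) w \<noteq> 0"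
proof -
  show "idempotent2 (msmult (1/k) w)" unfolding idempotent2_def
    using assms by (simp add: ms_mm_l ms_mm_r ms_ms power2_eq_square[symmetric])
  have "trace (msmult (1/k) w) \<noteq> 0" using assms by (simp add: tr_ms)
  thus "msmult (1/k) w \<noteq> 0" by (auto simp: ent)
qed

lemma avoid_scale:
  fixes w :: "'a::field mat2"
  assumes "is_subspace2 M" "avoid M" "w \<in> M" "w ** w = msmult k w" "k \<noteq> 0" "trace w \<noteq> 0"
  shows False
  using idem_scale[OF assms(4-6)] sub_sm[OF assms(1,3)] assms(2) unfolding avoid_def by blast



lemma mpow1: "mpow a 1 = a" by simp
lemma mpow2: "mpow a 2 = a ** a" by (simp add: numeral_2_eq_2)
lemma mpow_idem: "idempotent2 e \<Longrightarrow> mpow e (Suc n) = e"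
  by (induction n) (auto simp: idempotent2_def)
lemma mpow_sq0: "(a::'a::field mat2) ** a = 0 \<Longrightarrow> mpow a (Suc (Suc n)) = 0"
proof (induction n)
  case 0 thus ?case by simp
next
  case (Suc n)
  have "mpow a (Suc (Suc (Suc n))) = a ** mpow a (Suc (Suc n))" by simp
  thus ?case using Suc by simp
qed

lemma sq_zero_of_avoid:
  fixes a :: "'a::alg_closed_field mat2"
  assumes sub: "is_subspace2 M" and av: "avoid M" and two: "(2::'a) \<noteq> 0"
    and aM: "a \<in> M" and a2M: "a ** a \<in> M"
  shows "a ** a = 0"
proof -
  define t where "t = trace a"
  define dd where "dd = det a"
  obtain al where al: "dd + (-t)*al + 1*al^2 = 0" using quad_root[of "-t" 1 dd] by auto
  define be where "be = t - al"
  have h1: "al + be = a$1$1 + a$2$2" using be_def t_def by (simp add: ent)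
  have h2: "al * be = a$1$1*a$2$2 - a$1$2*a$2$1"
  proof -
    have "al*be = al*t - al^2" by (simp add: be_def algebra_simps power2_eq_square)
    also have "\<dots> = dd" using al by (simp add: algebra_simps)
    finally show ?thesis by (simp add: dd_def det_2)
  qed
  show ?thesis
  proof (cases "al = be")
    case False
    show ?thesis
    proof (cases "al = 0 \<or> be = 0")
      case False
      define w where "w = a ** a - msmult be a"
      have wM: "w \<in> M" unfolding w_def using sub aM a2M by (intro sub_diff sub_sm)
      have ww: "w ** w = msmult (al*(al-be)) w" unfolding meq w_def
        apply (simp add: ent) apply (insert h1 h2) apply (intro conjI) apply algebra+ done
      have tw: "trace w = al*(al-be)" unfolding w_def
        apply (simp add: ent) apply (insert h1 h2) apply algebra done
      have nz: "al*(al-be) \<noteq> 0" using False \<open>al \<noteq> be\<close> by auto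
      show ?thesis using avoid_scale[OF sub av wM ww nz] tw nz by simp
    next
      case True
      then obtain k where k: "k \<noteq> 0" "k = al \<or> k = be" "al * be = 0" "k = al + be"
        using \<open>al \<noteq> be\<close> by auto
      have "a ** a = msmult k a" unfolding meq
        apply (simp add: ent) apply (insert h1 h2 k(3,4)) apply (intro conjI) apply algebra+ done
      moreover have "trace a = k" using h1 k by (simp add: ent)
      ultimately show ?thesis using avoid_scale[OF sub av aM] k by auto
    qed
  next
    case True
    show ?thesis
    proof (cases "al = 0")
      case True
      with \<open>al = be\<close> h1 h2 show ?thesis unfolding meq
        apply (simp add: ent) apply (intro conjI) apply algebra+ done
    next
      case False
      define w where "w = msmult (2*al) a - a ** a"
      have wM: "w \<in> M" unfolding w_def using sub aM a2M by (intro sub_diff sub_sm)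
      have ww: "w ** w = msmult (al*al) w" unfolding meq w_def
        apply (simp add: ent) apply (insert h1 h2 \<open>al = be\<close>) apply (intro conjI) apply algebra+ done
      have tw: "trace w = 2 * (al*al)" unfolding w_def
        apply (simp add: ent) apply (insert h1 h2 \<open>al = be\<close>) apply algebra done
      have nz: "al*al \<noteq> 0" using False by auto
      show ?thesis using avoid_scale[OF sub av wM ww nz] tw nz two by simp
    qed
  qed
qed



definition unit2 :: "2 \<Rightarrow> 2 \<Rightarrow> 'a::field mat2" where
  "unit2 k l = (\<chi> i j. if i = k \<and> j = l then 1 else 0)"
lemma unit2_ent[simp]: "unit2 k l $ i $ j = (if i = k \<and> j = l then 1 else 0)"
  by (simp add: unit2_def)

lemma ul: "(unit2 k i ** (e::'a::field mat2)) $ a $ b = (if a = k then e$i$b else 0)"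
  using exhaust_2[of i] by (cases "a = k") (auto simp: mm_entry)
lemma ur: "((e::'a::field mat2) ** unit2 j l) $ a $ b = (if b = l then e$a$j else 0)"
  using exhaust_2[of j] by (cases "b = l") (auto simp: mm_entry)

lemma unit_prod: "((A::'a::field mat2) ** unit2 k l ** B) $ i $ j = A$i$k * B$l$j"
proof -
  have "((A ** unit2 k l) ** B) $ i $ j = (A ** unit2 k l)$i$1 * B$1$j + (A ** unit2 k l)$i$2 * B$2$j"
    by (rule mm_entry)
  also have "\<dots> = A$i$k * B$l$j" using exhaust_2[of l] by (auto simp: ur)
  finally show ?thesis .
qed

lemma unit_sandwich: "unit2 k i ** (e::'a::field mat2) ** unit2 j l = msmult (e$i$j) (unit2 k l)"
  unfolding vec_eq_iff by (auto simp: ur ul)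

lemma unit_decomp: "(x::'a::field mat2) = msmult (x$1$1) (unit2 1 1) + msmult (x$1$2) (unit2 1 2)
   + msmult (x$2$1) (unit2 2 1) + msmult (x$2$2) (unit2 2 2)"
  by (simp add: ent)

lemma ms_avoid:
  fixes M :: "'a::field mat2 set"
  assumes ms: "mathieu_subspace2 M" and ne: "M \<noteq> UNIV"
  shows "avoid M"
  unfolding avoid_def
proof (intro ballI impI, rule ccontr)
  fix e assume eM: "e \<in> M" and ei: "idempotent2 e" and nz: "e \<noteq> 0"
  have sub: "is_subspace2 M" using ms by (simp add: mathieu_subspace2_def)
  have pw: "\<forall>m\<ge>1. mpow e m \<in> M"
  proof (intro allI impI)
    fix m :: nat assume "m \<ge> 1"
    then obtain n where "m = Suc n" by (cases m) auto
    thus "mpow e m \<in> M" using mpow_idem[OF ei] eM by simp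
  qed
  have bec: "b ** e ** c \<in> M" for b c
  proof -
    obtain N where N: "\<forall>m\<ge>N. b ** mpow e m ** c \<in> M"
      using ms pw unfolding mathieu_subspace2_def by blast
    hence "b ** mpow e (Suc N) ** c \<in> M" using le_SucI by blast
    thus ?thesis using mpow_idem[OF ei] by simp
  qed
  obtain i j where ij: "e$i$j \<noteq> 0" using nz by (auto simp: vec_eq_iff)
  have U: "unit2 k l \<in> M" for k l
  proof -
    have "unit2 k l = msmult (1/e$i$j) (unit2 k i ** e ** unit2 j l)"
      using ij by (simp add: unit_sandwich ms_ms)
    thus ?thesis using bec[of "unit2 k i" "unit2 j l"] sub_sm[OF sub] by simp
  qed
  have "x \<in> M" for x
  proof -
    have "msmult (x$1$1) (unit2 1 1) + msmult (x$1$2) (unit2 1 2)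
   + msmult (x$2$1) (unit2 2 1) + msmult (x$2$2) (unit2 2 2) \<in> M"
      by (intro sub_add[OF sub] sub_sm[OF sub] U)
    thus ?thesis by (subst unit_decomp[of x])
  qed
  thus False using ne by auto
qed

lemma mat1_idem: "idempotent2 (mat 1 :: 'a::field mat2)"
  by (simp add: idempotent2_def)
lemma mat1_nz: "(mat 1 :: 'a::field mat2) \<noteq> 0"
  by (simp add: ent)

lemma avoid_ms:
  fixes M :: "'a::alg_closed_field mat2 set"
  assumes sub: "is_subspace2 M" and av: "avoid M" and two: "(2::'a) \<noteq> 0"
  shows "mathieu_subspace2 M \<and> M \<noteq> UNIV"
proof
  show "M \<noteq> UNIV" using av mat1_idem mat1_nz unfolding avoid_def by blast
  show "mathieu_subspace2 M" unfolding mathieu_subspace2_def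
  proof (intro conjI sub allI impI)
    fix a b c :: "'a mat2" assume pw: "\<forall>m\<ge>1. mpow a m \<in> M"
    have a1: "a \<in> M" using pw mpow1 by (metis order_refl)
    have le: "(1::nat) \<le> Suc (Suc 0)" by simp
    have "mpow a (Suc (Suc 0)) \<in> M" using pw le by blast
    hence a2: "a ** a \<in> M" by simp
    have aa: "a ** a = 0" using sq_zero_of_avoid[OF sub av two a1 a2] .
    show "\<exists>N. \<forall>m\<ge>N. b ** mpow a m ** c \<in> M"
    proof (intro exI allI impI)
      fix m :: nat assume "2 \<le> m"
      then obtain n where "m = Suc (Suc n)" by (metis add_2_eq_Suc le_Suc_ex)
      thus "b ** mpow a m ** c \<in> M" using mpow_sq0[OF aa] sub_zero[OF sub] by simp
    qed
  qed
qed

lemma max_iff: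
  fixes M :: "'a::alg_closed_field mat2 set"
  assumes two: "(2::'a) \<noteq> 0"
  shows "maximal_mathieu_subspace2 M \<longleftrightarrow>
     is_subspace2 M \<and> avoid M \<and> (\<forall>M'. is_subspace2 M' \<and> avoid M' \<and> M \<subseteq> M' \<longrightarrow> M' = M)"
proof -
  have eq: "mathieu_subspace2 N \<and> N \<noteq> UNIV \<longleftrightarrow> is_subspace2 N \<and> avoid N" for N :: "'a mat2 set"
    using ms_avoid avoid_ms[OF _ _ two] by (auto simp: mathieu_subspace2_def)
  show ?thesis unfolding maximal_mathieu_subspace2_def using eq by blast
qed



lemma disj_scalar:
  fixes a b c d p q r al be :: "'a::field"
  assumes "al + be = a + d" "al*be = a*d - b*c" "a*p + b*r + c*q - d*p = 0" "p*p + q*r = 0"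
  shows "(a*p + b*r - al*p = 0 \<and> a*q - b*p - al*q = 0 \<and> c*p + d*r - al*r = 0 \<and> c*q - d*p + al*p = 0) \<or>
         (a*p + b*r - be*p = 0 \<and> a*q - b*p - be*q = 0 \<and> c*p + d*r - be*r = 0 \<and> c*q - d*p + be*p = 0)"
proof -
  have p00: "(a*p + b*r - al*p) * (a*p + b*r - be*p) = 0" using assms by algebra
  have p01: "(a*p + b*r - al*p) * (a*q - b*p - be*q) = 0" using assms by algebra
  have p02: "(a*p + b*r - al*p) * (c*p + d*r - be*r) = 0" using assms by algebra
  have p03: "(a*p + b*r - al*p) * (c*q - d*p + be*p) = 0" using assms by algebra
  have p10: "(a*q - b*p - al*q) * (a*p + b*r - be*p) = 0" using assms by algebra
  have p11: "(a*q - b*p - al*q) * (a*q - b*p - be*q) = 0" using assms by algebra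
  have p12: "(a*q - b*p - al*q) * (c*p + d*r - be*r) = 0" using assms by algebra
  have p13: "(a*q - b*p - al*q) * (c*q - d*p + be*p) = 0" using assms by algebra
  have p20: "(c*p + d*r - al*r) * (a*p + b*r - be*p) = 0" using assms by algebra
  have p21: "(c*p + d*r - al*r) * (a*q - b*p - be*q) = 0" using assms by algebra
  have p22: "(c*p + d*r - al*r) * (c*p + d*r - be*r) = 0" using assms by algebra
  have p23: "(c*p + d*r - al*r) * (c*q - d*p + be*p) = 0" using assms by algebra
  have p30: "(c*q - d*p + al*p) * (a*p + b*r - be*p) = 0" using assms by algebra
  have p31: "(c*q - d*p + al*p) * (a*q - b*p - be*q) = 0" using assms by algebra
  have p32: "(c*q - d*p + al*p) * (c*p + d*r - be*r) = 0" using assms by algebra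
  have p33: "(c*q - d*p + al*p) * (c*q - d*p + be*p) = 0" using assms by algebra
  show ?thesis
  proof (cases "a*p + b*r - be*p = 0 \<and> a*q - b*p - be*q = 0 \<and> c*p + d*r - be*r = 0 \<and> c*q - d*p + be*p = 0")
    case True thus ?thesis by blast
  next
    case False
    { assume yj: "a*p + b*r - be*p \<noteq> 0"
      have ?thesis using p00 p10 p20 p30 yj by (metis mult_eq_0_iff) }
    moreover
    { assume yj: "a*q - b*p - be*q \<noteq> 0"
      have ?thesis using p01 p11 p21 p31 yj by (metis mult_eq_0_iff) }
    moreover
    { assume yj: "c*p + d*r - be*r \<noteq> 0"
      have ?thesis using p02 p12 p22 p32 yj by (metis mult_eq_0_iff) }
    moreover
    { assume yj: "c*q - d*p + be*p \<noteq> 0"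
      have ?thesis using p03 p13 p23 p33 yj by (metis mult_eq_0_iff) }
    ultimately show ?thesis using False by blast
  qed
qed

lemma prop_scalar:
  fixes a b c d p q r al :: "'a::field"
  assumes "al + al = a + d" "al*al = a*d - b*c" "a*p + b*r + c*q - d*p = 0" "p*p + q*r = 0"
    and nz: "a - al \<noteq> 0 \<or> b \<noteq> 0 \<or> c \<noteq> 0 \<or> d - al \<noteq> 0"
  shows "\<exists>s. p = s*(a-al) \<and> q = s*b \<and> r = s*c \<and> -p = s*(d-al)"
proof -
  have "(p*b - q*(a-al))^2 = 0" using assms(1-4) by algebra
  hence c01: "p*b = q*(a-al)" by (simp add: eq_neg_iff_add_eq_0)
  have "(p*c - r*(a-al))^2 = 0" using assms(1-4) by algebra
  hence c02: "p*c = r*(a-al)" by (simp add: eq_neg_iff_add_eq_0)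
  have "(p*(d-al) - -p*(a-al))^2 = 0" using assms(1-4) by algebra
  hence c03: "p*(d-al) = -p*(a-al)" by (simp add: eq_neg_iff_add_eq_0)
  have "(q*c - r*b)^2 = 0" using assms(1-4) by algebra
  hence c12: "q*c = r*b" by (simp add: eq_neg_iff_add_eq_0)
  have "(q*(d-al) - -p*b)^2 = 0" using assms(1-4) by algebra
  hence c13: "q*(d-al) = -p*b" by (simp add: eq_neg_iff_add_eq_0)
  have "(r*(d-al) - -p*c)^2 = 0" using assms(1-4) by algebra
  hence c23: "r*(d-al) = -p*c" by (simp add: eq_neg_iff_add_eq_0)
    { assume nk: "(a-al) \<noteq> 0"
      have ?thesis
        by (rule exI[of _ "(p)/(a-al)"]) (use nk c01 c02 c03 in \<open>auto simp: field_simps\<close>) }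
    moreover
    { assume nk: "b \<noteq> 0"
      have ?thesis
        by (rule exI[of _ "(q)/b"]) (use nk c01 c12 c13 in \<open>auto simp: field_simps\<close>) }
    moreover
    { assume nk: "c \<noteq> 0"
      have ?thesis
        by (rule exI[of _ "(r)/c"]) (use nk c02 c12 c23 in \<open>auto simp: field_simps\<close>) }
    moreover
    { assume nk: "(d-al) \<noteq> 0"
      have ?thesis
        by (rule exI[of _ "(-p)/(d-al)"]) (use nk c03 c13 c23 in \<open>auto simp: field_simps\<close>) }
  ultimately show ?thesis using nz by blast
qed


lemma CH: "(x::'a::field mat2) ** x = msmult (trace x) x - msmult (det x) (mat 1)"
  unfolding meq by (simp add: ent algebra_simps)

lemma det_lin:
  fixes u v :: "'a::field mat2"
  assumes "trace v = 0"
  shows "det (u + msmult t v) = det u - t * trace (u ** v) + t^2 * det v"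
proof -
  have "v$2$2 = - v$1$1" using assms by (simp add: ent eq_neg_iff_add_eq_0 add.commute)
  thus ?thesis by (simp add: ent algebra_simps power2_eq_square)
qed

lemma good:
  fixes M :: "'a::field mat2 set"
  assumes sub: "is_subspace2 M" and av: "avoid M" and two: "(2::'a) \<noteq> 0"
    and xM: "x \<in> M" and tx: "trace x \<noteq> 0"
  shows "det x \<noteq> 0" "x \<noteq> msmult k (mat 1)"
proof -
  show "det x \<noteq> 0"
  proof
    assume "det x = 0"
    hence "x ** x = msmult (trace x) x" using CH[of x] by (simp add: ent)
    thus False using avoid_scale[OF sub av xM _ tx tx] by blast
  qed
  show "x \<noteq> msmult k (mat 1)"
  proof
    assume xk: "x = msmult k (mat 1)"
    hence "trace x = 2 * k" by (simp add: ent)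
    hence k: "k \<noteq> 0" using tx by auto
    have "x ** x = msmult k x" unfolding xk meq by (simp add: ent)
    thus False using avoid_scale[OF sub av xM _ k tx] by blast
  qed
qed

lemma kfacts:
  fixes M :: "'a::alg_closed_field mat2 set"
  assumes sub: "is_subspace2 M" and av: "avoid M" and two: "(2::'a) \<noteq> 0"
    and uM: "u \<in> M" and tu: "trace u \<noteq> 0" and vM: "v \<in> M" and tv: "trace v = 0"
  shows "trace (u ** v) = 0 \<and> det v = 0"
proof (rule ccontr)
  assume "\<not> (trace (u ** v) = 0 \<and> det v = 0)"
  hence "- trace (u ** v) \<noteq> 0 \<or> det v \<noteq> 0" by auto
  then obtain t where t: "det u + (- trace (u ** v)) * t + det v * t^2 = 0"
    using quad_root by blast
  have "u + msmult t v \<in> M" using sub uM vM by (intro sub_add sub_sm)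
  moreover have "trace (u + msmult t v) \<noteq> 0" using tu tv by (simp add: tr_ms trace_add)
  ultimately have "det (u + msmult t v) \<noteq> 0" using good(1)[OF sub av two] by blast
  moreover have "det (u + msmult t v) = 0" using t det_lin[OF tv, of u t] by (simp add: algebra_simps)
  ultimately show False by simp
qed

lemma vu_id:
  fixes u v :: "'a::field mat2"
  assumes tv: "trace v = 0" and tuv: "trace (u ** v) = 0" and h1: "al + be = trace u"
  shows "v ** u = msmult (al+be) v - u ** v"
proof -
  have v22: "v$2$2 = - v$1$1" using tv by (simp add: ent eq_neg_iff_add_eq_0 add.commute)
  have e1: "al + be = u$1$1 + u$2$2" using h1 by (simp add: ent)
  have "u$1$1 * v$1$1 + u$1$2 * v$2$1 + u$2$1 * v$1$2 - u$2$2 * v$1$1 = trace (u ** v)" using v22 by (simp add: ent algebra_simps)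
  hence e2: "u$1$1 * v$1$1 + u$1$2 * v$2$1 + u$2$1 * v$1$2 - u$2$2 * v$1$1 = 0" using tuv by simp
  show ?thesis unfolding meq using e1 e2
    apply (simp add: ent v22)
    apply (intro conjI) apply ((simp add: algebra_simps; fail) | algebra)+ done
qed

lemma core_a:
  fixes u v :: "'a::field mat2"
  assumes tv: "trace v = 0" and tuv: "trace (u ** v) = 0" and dv: "det v = 0"
    and h1: "al + be = trace u" and h2: "al * be = det u"
  shows "(u ** v = msmult al v \<and> v ** u = msmult be v) \<or> (u ** v = msmult be v \<and> v ** u = msmult al v)"
proof -
  have v22: "v$2$2 = - v$1$1" using tv by (simp add: ent eq_neg_iff_add_eq_0 add.commute)
  have e1: "al + be = u$1$1 + u$2$2" using h1 by (simp add: ent)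
  have e2: "al * be = u$1$1 * u$2$2 - u$1$2 * u$2$1" using h2 by (simp add: ent)
  have "u$1$1 * v$1$1 + u$1$2 * v$2$1 + u$2$1 * v$1$2 - u$2$2 * v$1$1 = trace (u ** v)" using v22 by (simp add: ent algebra_simps)
  hence e3: "u$1$1 * v$1$1 + u$1$2 * v$2$1 + u$2$1 * v$1$2 - u$2$2 * v$1$1 = 0" using tuv by simp
  have "v$1$1 * v$1$1 + v$1$2 * v$2$1 = - det v" using v22 by (simp add: ent algebra_simps)
  hence e4: "v$1$1 * v$1$1 + v$1$2 * v$2$1 = 0" using dv by simp
  have vu: "v ** u = msmult (al+be) v - u ** v" by (rule vu_id[OF tv tuv h1])
  have side: "u ** v = msmult x v"
    if "u$1$1 * v$1$1 + u$1$2 * v$2$1 - x* v$1$1 = 0 \<and> u$1$1 * v$1$2 - u$1$2 * v$1$1 - x* v$1$2 = 0 \<and>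
        u$2$1 * v$1$1 + u$2$2 * v$2$1 - x* v$2$1 = 0 \<and> u$2$1 * v$1$2 - u$2$2 * v$1$1 + x* v$1$1 = 0" for x
    unfolding meq using that by (simp add: ent v22 eq_neg_iff_add_eq_0)
  from disj_scalar[OF e1 e2 e3 e4] show ?thesis
  proof
    assume "u$1$1 * v$1$1 + u$1$2 * v$2$1 - al* v$1$1 = 0 \<and> u$1$1 * v$1$2 - u$1$2 * v$1$1 - al* v$1$2 = 0 \<and>
        u$2$1 * v$1$1 + u$2$2 * v$2$1 - al* v$2$1 = 0 \<and> u$2$1 * v$1$2 - u$2$2 * v$1$1 + al* v$1$1 = 0"
    hence uv: "u ** v = msmult al v" by (rule side)
    hence "v ** u = msmult be v" using vu unfolding meq by (simp add: ent algebra_simps)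
    thus ?thesis using uv by simp
  next
    assume "u$1$1 * v$1$1 + u$1$2 * v$2$1 - be* v$1$1 = 0 \<and> u$1$1 * v$1$2 - u$1$2 * v$1$1 - be* v$1$2 = 0 \<and>
        u$2$1 * v$1$1 + u$2$2 * v$2$1 - be* v$2$1 = 0 \<and> u$2$1 * v$1$2 - u$2$2 * v$1$1 + be* v$1$1 = 0"
    hence uv: "u ** v = msmult be v" by (rule side)
    hence "v ** u = msmult al v" using vu unfolding meq by (simp add: ent algebra_simps)
    thus ?thesis using uv by simp
  qed
qed

lemma core_b_vec:
  fixes u v :: "'a::field mat2"
  assumes tv: "trace v = 0" and tuv: "trace (u ** v) = 0" and dv: "det v = 0"
    and h1: "al + al = trace u" and h2: "al * al = det u" and ns: "u \<noteq> msmult al (mat 1)"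
  shows "\<exists>s. v = msmult s (u - msmult al (mat 1))"
proof -
  have v22: "v$2$2 = - v$1$1" using tv by (simp add: ent eq_neg_iff_add_eq_0 add.commute)
  have e1: "al + al = u$1$1 + u$2$2" using h1 by (simp add: ent)
  have e2: "al * al = u$1$1 * u$2$2 - u$1$2 * u$2$1" using h2 by (simp add: ent)
  have "u$1$1 * v$1$1 + u$1$2 * v$2$1 + u$2$1 * v$1$2 - u$2$2 * v$1$1 = trace (u ** v)" using v22 by (simp add: ent algebra_simps)
  hence e3: "u$1$1 * v$1$1 + u$1$2 * v$2$1 + u$2$1 * v$1$2 - u$2$2 * v$1$1 = 0" using tuv by simp
  have "v$1$1 * v$1$1 + v$1$2 * v$2$1 = - det v" using v22 by (simp add: ent algebra_simps)
  hence e4: "v$1$1 * v$1$1 + v$1$2 * v$2$1 = 0" using dv by simp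
  have nz: "u$1$1 - al \<noteq> 0 \<or> u$1$2 \<noteq> 0 \<or> u$2$1 \<noteq> 0 \<or> u$2$2 - al \<noteq> 0"
    using ns unfolding meq by (simp add: ent)
  obtain s where s: "v$1$1 = s*(u$1$1-al)" "v$1$2 = s*u$1$2" "v$2$1 = s*u$2$1" "-v$1$1 = s*(u$2$2-al)"
    using prop_scalar[OF e1 e2 e3 e4 nz] by blast
  have "v = msmult s (u - msmult al (mat 1))" unfolding meq using s v22 by (simp add: ent algebra_simps)
  thus ?thesis by blast
qed

lemma core_b:
  fixes M :: "'a::alg_closed_field mat2 set"
  assumes sub: "is_subspace2 M" and av: "avoid M" and two: "(2::'a) \<noteq> 0"
    and uM: "u \<in> M" and tu: "trace u \<noteq> 0" and h1: "al + al = trace u" and h2: "al * al = det u"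
    and vM: "v \<in> M" and tv: "trace v = 0"
  shows "v = 0"
proof (rule ccontr)
  assume vnz: "v \<noteq> 0"
  have kf: "trace (u ** v) = 0 \<and> det v = 0" using kfacts[OF sub av two uM tu vM tv] .
  have ns: "u \<noteq> msmult al (mat 1)" using good(2)[OF sub av two uM tu] .
  obtain s where s: "v = msmult s (u - msmult al (mat 1))" using core_b_vec[OF tv _ _ h1 h2 ns] kf by blast
  have s0: "s \<noteq> 0" using vnz s by auto
  have "u - msmult (1/s) v \<in> M" using sub uM vM by (intro sub_diff sub_sm)
  moreover have "u - msmult (1/s) v = msmult al (mat 1)" unfolding s meq using s0 by (simp add: ent field_simps)
  moreover have "trace (msmult al (mat 1) :: 'a mat2) \<noteq> 0" using tu h1 by (simp add: ent)
  ultimately show False using good(2)[OF sub av two, of "msmult al (mat 1)" al] by auto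
qed



definition Tset :: "'a::field mat2 set" where "Tset = {b. trace b = 0}"
definition Dset :: "'a::field mat2 \<Rightarrow> 'a mat2 \<Rightarrow> 'a \<Rightarrow> 'a \<Rightarrow> 'a mat2 set" where
  "Dset e1 e2 l1 l2 = {msmult t (msmult l1 e1 + msmult l2 e2) + e1 ** x ** e2 | t x. True}"
definition Nset :: "'a::field mat2 \<Rightarrow> 'a mat2 set" where
  "Nset c = {msmult t (mat 1 + c) | t. True}"

definition Dcond :: "'a::field mat2 \<Rightarrow> 'a mat2 \<Rightarrow> 'a \<Rightarrow> 'a \<Rightarrow> bool" where
  "Dcond e1 e2 l1 l2 \<longleftrightarrow> idempotent2 e1 \<and> idempotent2 e2 \<and> e1 \<noteq> 0 \<and> e2 \<noteq> 0 \<and>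
          e1 + e2 = mat 1 \<and> l1 \<noteq> l2 \<and> l1 \<noteq> 0 \<and> l2 \<noteq> 0 \<and> l1 + l2 \<noteq> 0"

definition Lrel :: "'a::field mat2 \<Rightarrow> 'a \<Rightarrow> 'a \<Rightarrow> 'a mat2 \<Rightarrow> bool" where
  "Lrel u al be v \<longleftrightarrow> u ** v = msmult al v \<and> v ** u = msmult be v"

lemma Lrel_diff: "Lrel u al be a \<Longrightarrow> Lrel u al be b \<Longrightarrow> Lrel u al be (a - b)"
  unfolding Lrel_def by (simp add: mm_ldiff mm_rdiff ms_diff)

lemma tr_diff: "trace ((a::'a::field mat2) - b) = trace a - trace b"
  by (simp add: ent)
lemma tr_add: "trace ((a::'a::field mat2) + b) = trace a + trace b"
  by (simp add: ent)

lemma decomp: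
  fixes M :: "'a::field mat2 set"
  assumes sub: "is_subspace2 M" and uM: "u \<in> M" and tu: "trace u \<noteq> 0" and mM: "m \<in> M"
  shows "m - msmult (trace m / trace u) u \<in> M" "trace (m - msmult (trace m / trace u) u) = 0"
    "m = msmult (trace m / trace u) u + (m - msmult (trace m / trace u) u)"
  using sub uM mM tu by (auto intro: sub_diff sub_sm simp: tr_diff tr_ms)

lemma unif:
  fixes M :: "'a::field mat2 set"
  assumes sub: "is_subspace2 M"
    and H: "\<forall>v\<in>M. trace v = 0 \<longrightarrow> Lrel u al be v \<or> Lrel u be al v"
  shows "(\<forall>v\<in>M. trace v = 0 \<longrightarrow> Lrel u al be v) \<or> (\<forall>v\<in>M. trace v = 0 \<longrightarrow> Lrel u be al v)"
proof (rule ccontr)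
  assume "\<not> ?thesis"
  then obtain v1 v2 where v1: "v1 \<in> M" "trace v1 = 0" "\<not> Lrel u al be v1"
    and v2: "v2 \<in> M" "trace v2 = 0" "\<not> Lrel u be al v2" by blast
  have l1: "Lrel u be al v1" using H v1 by blast
  have l2: "Lrel u al be v2" using H v2 by blast
  have s: "v1 + v2 \<in> M" "trace (v1 + v2) = 0" using sub v1 v2 by (auto intro: sub_add simp: tr_add)
  show False
  proof (cases "Lrel u al be (v1 + v2)")
    case True
    hence "Lrel u al be ((v1 + v2) - v2)" using l2 Lrel_diff by blast
    thus False using v1 by simp
  next
    case False
    hence "Lrel u be al (v1 + v2)" using H s by blast
    hence "Lrel u be al ((v1 + v2) - v1)" using l1 Lrel_diff by blast
    thus False using v2 by simp
  qed
qed

lemma core_a_set: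
  fixes M :: "'a::alg_closed_field mat2 set"
  assumes sub: "is_subspace2 M" and av: "avoid M" and two: "(2::'a) \<noteq> 0"
    and uM: "u \<in> M" and tu: "trace u \<noteq> 0" and h1: "al + be = trace u" and h2: "al * be = det u"
  shows "(\<forall>v\<in>M. trace v = 0 \<longrightarrow> Lrel u al be v) \<or> (\<forall>v\<in>M. trace v = 0 \<longrightarrow> Lrel u be al v)"
proof (rule unif[OF sub])
  show "\<forall>v\<in>M. trace v = 0 \<longrightarrow> Lrel u al be v \<or> Lrel u be al v"
  proof (intro ballI impI)
    fix v assume "v \<in> M" "trace v = 0"
    with kfacts[OF sub av two uM tu] have "trace (u ** v) = 0" "det v = 0" by auto
    from core_a[OF \<open>trace v = 0\<close> this h1 h2] show "Lrel u al be v \<or> Lrel u be al v"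
      unfolding Lrel_def by blast
  qed
qed

text \<open>The idempotents attached to an element with two distinct eigenvalues.\<close>
definition Eproj :: "'a::field mat2 \<Rightarrow> 'a \<Rightarrow> 'a \<Rightarrow> 'a mat2" where
  "Eproj u al be = msmult (1/(al-be)) (u - msmult be (mat 1))"

lemma sandwich_eq:
  fixes u v :: "'a::field mat2"
  assumes L: "Lrel u al be v" and ne: "al \<noteq> be"
  shows "Eproj u al be ** v ** Eproj u be al = v"
proof -
  have uv: "u ** v = msmult al v" and vu: "v ** u = msmult be v" using L by (auto simp: Lrel_def)
  have "Eproj u al be ** v = msmult (1/(al-be)) (u ** v - msmult be v)"
    unfolding Eproj_def by (simp add: ms_mm_l mm_rdiff)
  also have "\<dots> = v" unfolding uv meq using ne by (simp add: ent field_simps)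
  finally have a: "Eproj u al be ** v = v" .
  have "v ** Eproj u be al = msmult (1/(be-al)) (v ** u - msmult al v)"
    unfolding Eproj_def by (simp add: ms_mm_r mm_ldiff)
  also have "\<dots> = v" unfolding vu meq using ne by (simp add: ent field_simps)
  finally have b: "v ** Eproj u be al = v" .
  show ?thesis using a b by simp
qed

lemma idem_props:
  fixes e1 e2 :: "'a::field mat2"
  assumes i1: "idempotent2 e1" and n1: "e1 \<noteq> 0" and n2: "e2 \<noteq> 0" and s: "e1 + e2 = mat 1"
  shows "trace e1 = 1" "det e1 = 0" "e1 ** e2 = 0" "e2 ** e1 = 0"
proof -
  have e2: "e2 = mat 1 - e1" using s by (metis add_diff_cancel_left')
  have "e1 \<noteq> mat 1" using n2 e2 by auto
  thus "trace e1 = 1" "det e1 = 0" using idem_cases[OF i1] n1 by auto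
  have ee: "e1 ** e1 = e1" using i1 by (simp add: idempotent2_def)
  show "e1 ** e2 = 0" unfolding e2 by (simp add: mm_ldiff ee)
  show "e2 ** e1 = 0" unfolding e2 by (simp add: mm_rdiff ee)
qed

lemma det_ms: "det (msmult t (u::'a::field mat2)) = t^2 * det u"
  by (simp add: ent algebra_simps power2_eq_square)

lemma det_comb_sc:
  fixes a b c d l1 l2 :: "'a::idom"
  assumes "a + d = 1" "a*d - b*c = 0"
  shows "(l1*a + l2*(1-a))*(l1*d + l2*(1-d)) - (l1*b + l2*(0-b))*(l1*c + l2*(0-c)) = l1*l2"
  using assms by algebra

lemma det_comb:
  fixes e1 :: "'a::field mat2"
  assumes "trace e1 = 1" "det e1 = 0"
  shows "det (msmult l1 e1 + msmult l2 (mat 1 - e1)) = l1 * l2"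
proof -
  have "det (msmult l1 e1 + msmult l2 (mat 1 - e1)) =
    (l1*e1$1$1 + l2*(1-e1$1$1))*(l1*e1$2$2 + l2*(1-e1$2$2)) - (l1*e1$1$2 + l2*(0-e1$1$2))*(l1*e1$2$1 + l2*(0-e1$2$1))"
    by (simp add: ent)
  also have "\<dots> = l1 * l2" using assms by (intro det_comb_sc) (simp_all add: ent)
  finally show ?thesis .
qed


lemma Dfacts:
  fixes e1 e2 :: "'a::field mat2"
  assumes D: "Dcond e1 e2 l1 l2"
  defines "u \<equiv> msmult l1 e1 + msmult l2 e2"
  shows "trace u = l1 + l2" "det u = l1 * l2"
    "u ** (e1 ** x ** e2) = msmult l1 (e1 ** x ** e2)"
    "(e1 ** x ** e2) ** u = msmult l2 (e1 ** x ** e2)"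
    "trace (e1 ** x ** e2) = 0" "det (e1 ** x ** e2) = 0"
    "Eproj u l1 l2 = e1" "Eproj u l2 l1 = e2"
proof -
  have i1: "idempotent2 e1" and i2: "idempotent2 e2" and n1: "e1 \<noteq> 0" and n2: "e2 \<noteq> 0"
    and s: "e1 + e2 = mat 1" and ne: "l1 \<noteq> l2" using D by (auto simp: Dcond_def)
  note P1 = idem_props[OF i1 n1 n2 s]
  have s': "e2 + e1 = mat 1" using s by (simp add: add.commute)
  note P2 = idem_props[OF i2 n2 n1 s']
  have e2: "e2 = mat 1 - e1" using s by (metis add_diff_cancel_left')
  have ee1: "e1 ** e1 = e1" using i1 by (simp add: idempotent2_def)
  have ee2: "e2 ** e2 = e2" using i2 by (simp add: idempotent2_def)
  show "trace u = l1 + l2" unfolding u_def using P1 P2 by (simp add: tr_add tr_ms)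
  show "det u = l1 * l2" unfolding u_def e2 using det_comb[OF P1(1,2)] by simp
  have ue1: "u ** e1 = msmult l1 e1" unfolding u_def
    by (simp add: mm_rdistrib ms_mm_l ee1 P2(3))
  have e2u: "e2 ** u = msmult l2 e2" unfolding u_def
    by (simp add: matrix_add_ldistrib ms_mm_r ee2 P1(4))
  show "u ** (e1 ** x ** e2) = msmult l1 (e1 ** x ** e2)"
    by (simp add: matrix_mul_assoc ue1 ms_mm_l)
  show "(e1 ** x ** e2) ** u = msmult l2 (e1 ** x ** e2)"
    by (simp add: matrix_mul_assoc[symmetric] e2u ms_mm_r)
  have "trace (e1 ** x ** e2) = trace (e2 ** (e1 ** x))" by (rule tr_comm)
  also have "\<dots> = trace ((e2 ** e1) ** x)" by (simp add: matrix_mul_assoc)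
  also have "\<dots> = 0" by (simp add: P1(4) trace_0[unfolded mat_0])
  finally show "trace (e1 ** x ** e2) = 0" .
  show "det (e1 ** x ** e2) = 0" using P1(2) by (simp add: det_mul)
  show "Eproj u l1 l2 = e1" unfolding Eproj_def u_def e2 meq using ne by (simp add: ent field_simps)
  show "Eproj u l2 l1 = e2" unfolding Eproj_def u_def e2 meq using ne by (simp add: ent field_simps)
qed

lemma Dsub: "is_subspace2 (Dset (e1::'a::field mat2) e2 l1 l2)"
  unfolding is_subspace2_def Dset_def
proof (intro conjI allI impI ballI)
  show "0 \<in> {msmult t (msmult l1 e1 + msmult l2 e2) + e1 ** x ** e2 |t x. True}"
    by (rule CollectI, rule exI[of _ 0], rule exI[of _ 0]) (simp add: ent)
next
  fix a b assume "a \<in> {msmult t (msmult l1 e1 + msmult l2 e2) + e1 ** x ** e2 |t x. True}"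
    "b \<in> {msmult t (msmult l1 e1 + msmult l2 e2) + e1 ** x ** e2 |t x. True}"
  then obtain t x t' x' where a: "a = msmult t (msmult l1 e1 + msmult l2 e2) + e1 ** x ** e2"
    and b: "b = msmult t' (msmult l1 e1 + msmult l2 e2) + e1 ** x' ** e2" by blast
  have "a + b = msmult (t+t') (msmult l1 e1 + msmult l2 e2) + e1 ** (x + x') ** e2"
    unfolding a b meq by (simp add: ent algebra_simps)
  thus "a + b \<in> {msmult t (msmult l1 e1 + msmult l2 e2) + e1 ** x ** e2 |t x. True}" by blast
next
  fix c a assume "a \<in> {msmult t (msmult l1 e1 + msmult l2 e2) + e1 ** x ** e2 |t x. True}"
  then obtain t x where a: "a = msmult t (msmult l1 e1 + msmult l2 e2) + e1 ** x ** e2" by blast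
  have "msmult c a = msmult (c*t) (msmult l1 e1 + msmult l2 e2) + e1 ** (msmult c x) ** e2"
    unfolding a meq by (simp add: ent algebra_simps)
  thus "msmult c a \<in> {msmult t (msmult l1 e1 + msmult l2 e2) + e1 ** x ** e2 |t x. True}" by blast
qed

lemma mat1_sc:
  fixes t l1 l2 :: "'a::idom"
  assumes "t*(l1+l2) = 2" "t^2*(l1*l2) = 1"
  shows "(t*(l1-l2))^2 = 0"
proof -
  have "(t*(l1-l2))^2 = (t*(l1+l2))^2 - 4*(t^2*(l1*l2))" by (simp add: algebra_simps power2_eq_square)
  also have "\<dots> = 0" using assms by simp
  finally show ?thesis .
qed

lemma Davoid:
  fixes e1 e2 :: "'a::field mat2"
  assumes D: "Dcond e1 e2 l1 l2" and two: "(2::'a) \<noteq> 0"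
  shows "avoid (Dset e1 e2 l1 l2)"
  unfolding avoid_def
proof (intro ballI impI)
  fix z assume "z \<in> Dset e1 e2 l1 l2" and iz: "idempotent2 z"
  then obtain t x where z: "z = msmult t (msmult l1 e1 + msmult l2 e2) + e1 ** x ** e2"
    unfolding Dset_def by blast
  define u where "u = msmult l1 e1 + msmult l2 e2"
  define w where "w = e1 ** x ** e2"
  note F0 = Dfacts(1,2)[OF D, folded u_def]
  note Fx = Dfacts(3-6)[OF D, of x, folded u_def, folded w_def]
  note F = F0 Fx
  have ne: "l1 \<noteq> l2" using D by (simp add: Dcond_def)
  have z': "z = msmult t u + w" using z u_def w_def by simp
  have tz: "trace z = t * (l1 + l2)" by (simp add: z' tr_add tr_ms F(1) F(5))
  have "det z = det (msmult t u + msmult 1 w)" unfolding z u_def w_def by simp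
  also have "\<dots> = det (msmult t u) - 1 * trace (msmult t u ** w) + 1^2 * det w"
    by (rule det_lin) (simp add: F(5))
  also have "\<dots> = t^2 * (l1 * l2)"
    by (simp add: det_ms F(2,3,6) ms_mm_l tr_ms F(5))
  finally have dz: "det z = t^2 * (l1 * l2)" .
  show "z = 0"
  proof (rule ccontr)
    assume "z \<noteq> 0"
    with idem_cases[OF iz] have "z = mat 1 \<or> (trace z = 1 \<and> det z = 0)" by blast
    thus False
    proof
      assume "z = mat 1"
      hence "t*(l1+l2) = 2" "t^2*(l1*l2) = 1" using tz dz by (simp_all add: ent)
      hence "(t*(l1-l2))^2 = 0" by (rule mat1_sc)
      hence "t = 0" using ne by simp
      thus False using \<open>t*(l1+l2) = 2\<close> two by simp
    next
      assume "trace z = 1 \<and> det z = 0"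
      hence "t * (l1 + l2) = 1" "t^2 * (l1*l2) = 0" using tz dz by auto
      moreover have "l1 \<noteq> 0" "l2 \<noteq> 0" using D by (auto simp: Dcond_def)
      ultimately show False by auto
    qed
  qed
qed

lemma det_pow: "det (mpow (c::'a::field mat2) n) = det c ^ n"
  by (induction n) (simp_all add: det_mul)

lemma mpow_tr:
  fixes c :: "'a::field mat2"
  assumes "det c = 0"
  shows "mpow c (Suc n) = msmult (trace c ^ n) c"
proof (induction n)
  case 0 thus ?case by simp
next
  case (Suc n)
  have cc: "c ** c = msmult (trace c) c" using CH[of c] assms by (simp add: ent)
  have "mpow c (Suc (Suc n)) = c ** mpow c (Suc n)" by simp
  also have "\<dots> = msmult (trace c ^ n * trace c) c" using Suc by (simp add: ms_mm_r cc ms_ms)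
  finally show ?case by (simp add: algebra_simps)
qed

lemma nilp_props:
  fixes c :: "'a::field mat2"
  assumes nz: "c \<noteq> 0" and np: "nilpotent2 c"
  shows "trace c = 0" "det c = 0" "c ** c = 0"
proof -
  obtain k where k: "mpow c k = 0" using np by (auto simp: nilpotent2_def)
  have "k \<noteq> 0" using k mat1_nz by (cases k) auto
  then obtain n where kn: "k = Suc n" by (cases k) auto
  have "det c ^ k = 0" using det_pow[of c k] k by (simp add: ent)
  thus dc: "det c = 0" by simp
  have "msmult (trace c ^ n) c = 0" using mpow_tr[OF dc, of n] k kn by simp
  hence tn: "trace c ^ n = 0" using nz unfolding meq by (auto simp: ent)
  hence "n \<noteq> 0" by (cases n) auto
  thus tc: "trace c = 0" using tn by simp
  show "c ** c = 0" using CH[of c] tc dc by (simp add: ent)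
qed

lemma Nsub: "is_subspace2 (Nset (c::'a::field mat2))"
  unfolding is_subspace2_def Nset_def
proof (intro conjI allI impI ballI)
  show "0 \<in> {msmult t (mat 1 + c) |t. True}" by (rule CollectI, rule exI[of _ 0]) simp
next
  fix a b assume "a \<in> {msmult t (mat 1 + c) |t. True}" "b \<in> {msmult t (mat 1 + c) |t. True}"
  then obtain t t' where "a = msmult t (mat 1 + c)" "b = msmult t' (mat 1 + c)" by blast
  hence "a + b = msmult (t + t') (mat 1 + c)" unfolding meq by (simp add: ent algebra_simps)
  thus "a + b \<in> {msmult t (mat 1 + c) |t. True}" by blast
next
  fix k a assume "a \<in> {msmult t (mat 1 + c) |t. True}"
  then obtain t where "a = msmult t (mat 1 + c)" by blast
  hence "msmult k a = msmult (k*t) (mat 1 + c)" by (simp add: ms_ms)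
  thus "msmult k a \<in> {msmult t (mat 1 + c) |t. True}" by blast
qed

lemma det_I_plus: "det (mat 1 + (c::'a::field mat2)) = 1 + trace c + det c"
  by (simp add: ent algebra_simps)

lemma Navoid:
  fixes c :: "'a::field mat2"
  assumes nz: "c \<noteq> 0" and np: "nilpotent2 c" and two: "(2::'a) \<noteq> 0"
  shows "avoid (Nset c)"
  unfolding avoid_def
proof (intro ballI impI)
  fix z assume "z \<in> Nset c" and iz: "idempotent2 z"
  then obtain t where z: "z = msmult t (mat 1 + c)" unfolding Nset_def by blast
  note P = nilp_props[OF nz np]
  have tm: "trace (mat 1 :: 'a mat2) = 2" by (simp add: ent)
  have tz: "trace z = 2 * t" unfolding z using P by (simp add: tr_ms tr_add tm)
  have dz: "det z = t^2" unfolding z using P by (simp add: det_ms det_I_plus)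
  show "z = 0"
  proof (rule ccontr)
    assume "z \<noteq> 0"
    with idem_cases[OF iz] have "z = mat 1 \<or> (trace z = 1 \<and> det z = 0)" by blast
    thus False
    proof
      assume z1: "z = mat 1"
      hence "2 * t = 2" using tz by (simp add: ent)
      hence "t = 1" using two by simp
      hence "mat 1 + c = mat 1" using z z1 by simp
      hence "c = 0" by simp
      thus False using nz by simp
    next
      assume "trace z = 1 \<and> det z = 0"
      hence "2 * t = 1" "t^2 = 0" using tz dz by auto
      thus False by simp
    qed
  qed
qed

lemma Tsub: "is_subspace2 (Tset :: 'a::field mat2 set)"
  unfolding is_subspace2_def Tset_def by (auto simp: tr_add tr_ms trace_0[unfolded mat_0])

lemma Tavoid: "(2::'a::field) \<noteq> 0 \<Longrightarrow> avoid (Tset :: 'a mat2 set)"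
  unfolding avoid_def Tset_def
proof (intro ballI impI)
  fix z :: "'a mat2" assume two: "(2::'a) \<noteq> 0" and "z \<in> {b. trace b = 0}" and iz: "idempotent2 z"
  hence tz: "trace z = 0" by simp
  show "z = 0" using idem_cases[OF iz] tz two by (auto simp: ent)
qed



lemma s1: fixes x al be d :: "'a::field" assumes "al \<noteq> be"
  shows "(x - be*d)/(al-be) + (x - al*d)/(be-al) = d"
proof -
  have n: "al - be \<noteq> 0" using assms by simp
  have "(x - al*d)/(be-al) = - ((x - al*d)/(al-be))" by (metis minus_diff_eq divide_minus_right)
  hence "(x - be*d)/(al-be) + (x - al*d)/(be-al) = ((x - be*d) - (x - al*d))/(al-be)"
    by (simp add: diff_divide_distrib)
  also have "\<dots> = d * (al - be) / (al - be)" by (simp add: algebra_simps)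
  also have "\<dots> = d" using n by simp
  finally show ?thesis .
qed
lemma s2: fixes x al be d :: "'a::field" assumes "al \<noteq> be"
  shows "al * ((x - be*d)/(al-be)) + be * ((x - al*d)/(be-al)) = x"
proof -
  have n: "al - be \<noteq> 0" using assms by simp
  have i: "inverse (be - al) = - inverse (al - be)" by (metis minus_diff_eq inverse_minus_eq)
  have "al * ((x - be*d)/(al-be)) + be * ((x - al*d)/(be-al)) = (x * (al - be)) * inverse (al - be)"
    by (simp add: divide_inverse i algebra_simps)
  also have "\<dots> = x" using n by simp
  finally show ?thesis .
qed

lemma proj_idem:
  fixes u :: "'a::field mat2"
  assumes h1: "al + be = trace u" and h2: "al * be = det u" and ne: "al \<noteq> be"
  shows "idempotent2 (Eproj u al be)" "Eproj u al be \<noteq> 0"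
proof -
  define w where "w = u - msmult be (mat 1)"
  have e1: "al + be = u$1$1 + u$2$2" using h1 by (simp add: ent)
  have e2: "al * be = u$1$1 * u$2$2 - u$1$2 * u$2$1" using h2 by (simp add: ent)
  have ww: "w ** w = msmult (al - be) w" unfolding w_def meq using e1 e2
    apply (simp add: ent)
    apply (intro conjI) apply ((simp add: algebra_simps; fail) | algebra)+ done
  have tw: "trace w = al - be" unfolding w_def using h1 by (simp add: tr_diff tr_ms ent, metis add.commute)
  have k: "al - be \<noteq> 0" using ne by simp
  have "Eproj u al be = msmult (1/(al-be)) w" by (simp add: Eproj_def w_def)
  thus "idempotent2 (Eproj u al be)" "Eproj u al be \<noteq> 0"
    using idem_scale[OF ww k] tw k by auto
qed

lemma diag_cover:
  fixes M :: "'a::field mat2 set"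
  assumes sub: "is_subspace2 M" and uM: "u \<in> M" and tu: "trace u \<noteq> 0"
    and h1: "al + be = trace u" and h2: "al * be = det u" and ne: "al \<noteq> be" and du: "det u \<noteq> 0"
    and L: "\<forall>v\<in>M. trace v = 0 \<longrightarrow> Lrel u al be v"
  shows "\<exists>e1 e2 l1 l2. Dcond e1 e2 l1 l2 \<and> M \<subseteq> Dset e1 e2 l1 l2"
proof (intro exI conjI)
  have h1': "be + al = trace u" and h2': "be * al = det u" using h1 h2 by (simp_all add: algebra_simps)
  have ne': "be \<noteq> al" using ne by simp
  note I1 = proj_idem[OF h1 h2 ne] and I2 = proj_idem[OF h1' h2' ne']
  have fb: "be - al = -(al - be)" by simp
  have ne2: "al - be \<noteq> 0" using ne by simp
  have sum: "Eproj u al be + Eproj u be al = mat 1"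
  proof -
    have "(Eproj u al be + Eproj u be al)$i$j = (mat 1::'a mat2)$i$j" for i j
    proof -
      have "(Eproj u al be + Eproj u be al)$i$j = (u$i$j - be * (mat 1::'a mat2)$i$j)/(al-be) + (u$i$j - al * (mat 1::'a mat2)$i$j)/(be-al)"
        by (simp add: Eproj_def)
      also have "\<dots> = (mat 1::'a mat2)$i$j" by (rule s1[OF ne])
      finally show ?thesis .
    qed
    thus ?thesis by (simp add: vec_eq_iff)
  qed
  have ueq: "u = msmult al (Eproj u al be) + msmult be (Eproj u be al)"
  proof -
    have "(msmult al (Eproj u al be) + msmult be (Eproj u be al))$i$j = u$i$j" for i j
    proof -
      have "(msmult al (Eproj u al be) + msmult be (Eproj u be al))$i$j = al * ((u$i$j - be * (mat 1::'a mat2)$i$j)/(al-be)) + be * ((u$i$j - al * (mat 1::'a mat2)$i$j)/(be-al))"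
        by (simp add: Eproj_def)
      also have "\<dots> = u$i$j" by (rule s2[OF ne])
      finally show ?thesis .
    qed
    thus ?thesis by (simp add: vec_eq_iff)
  qed
  have "al \<noteq> 0" "be \<noteq> 0" using du h2 by auto
  moreover have "al + be \<noteq> 0" using tu h1 by simp
  ultimately show "Dcond (Eproj u al be) (Eproj u be al) al be"
    unfolding Dcond_def using I1 I2 sum ne by auto
  show "M \<subseteq> Dset (Eproj u al be) (Eproj u be al) al be"
  proof
    fix m assume mM: "m \<in> M"
    define t where "t = trace m / trace u"
    define v where "v = m - msmult t u"
    have vM: "v \<in> M" "trace v = 0" using decomp[OF sub uM tu mM] by (simp_all add: v_def t_def)
    have sw: "Eproj u al be ** v ** Eproj u be al = v" using sandwich_eq[OF _ ne] L vM by blast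
    have "m = msmult t (msmult al (Eproj u al be) + msmult be (Eproj u be al)) + Eproj u al be ** v ** Eproj u be al"
      using sw ueq v_def by simp
    thus "m \<in> Dset (Eproj u al be) (Eproj u be al) al be" unfolding Dset_def by blast
  qed
qed

lemma nil_cover:
  fixes M :: "'a::alg_closed_field mat2 set"
  assumes sub: "is_subspace2 M" and av: "avoid M" and two: "(2::'a) \<noteq> 0"
    and uM: "u \<in> M" and tu: "trace u \<noteq> 0" and h1: "al + al = trace u" and h2: "al * al = det u"
  shows "\<exists>c. c \<noteq> 0 \<and> nilpotent2 c \<and> M \<subseteq> Nset c"
proof -
  have du: "det u \<noteq> 0" using good(1)[OF sub av two uM tu] .
  hence al0: "al \<noteq> 0" using h2 by auto
  have ns: "u \<noteq> msmult al (mat 1)" using good(2)[OF sub av two uM tu] .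
  define w where "w = u - msmult al (mat 1)"
  define c where "c = msmult (1/al) w"
  have e1: "al + al = u$1$1 + u$2$2" using h1 by (simp add: ent)
  have e2: "al * al = u$1$1 * u$2$2 - u$1$2 * u$2$1" using h2 by (simp add: ent)
  have ww: "w ** w = 0" unfolding w_def meq using e1 e2
    apply (simp add: ent)
    apply (intro conjI) apply ((simp add: algebra_simps; fail) | algebra)+ done
  have cc: "c ** c = 0" unfolding c_def by (simp add: ms_mm_l ms_mm_r ms_ms ww)
  have np: "nilpotent2 c" unfolding nilpotent2_def
    by (rule exI[of _ "Suc (Suc 0)"]) (simp add: cc)
  have cnz: "c \<noteq> 0"
  proof
    assume "c = 0"
    hence "u = msmult al (mat 1)" unfolding c_def w_def meq using al0 by (simp add: ent field_simps)
    thus False using ns by simp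
  qed
  have "M \<subseteq> Nset c"
  proof
    fix m assume mM: "m \<in> M"
    define t where "t = trace m / trace u"
    define v where "v = m - msmult t u"
    have vM: "v \<in> M" "trace v = 0" using decomp[OF sub uM tu mM] by (simp_all add: v_def t_def)
    have v0: "v = 0" using core_b[OF sub av two uM tu h1 h2 vM] .
    have mt: "m = msmult t u" using v0 v_def by simp
    have "u = msmult al (mat 1 + c)" unfolding c_def w_def meq using al0
      by (simp add: ent field_simps)
    hence "m = msmult (t*al) (mat 1 + c)" using mt by (simp add: ms_ms)
    thus "m \<in> Nset c" unfolding Nset_def by blast
  qed
  thus ?thesis using cnz np by (intro exI[of _ c] conjI)
qed

lemma cover:
  fixes M :: "'a::alg_closed_field mat2 set"
  assumes sub: "is_subspace2 M" and av: "avoid M" and two: "(2::'a) \<noteq> 0"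
  shows "M \<subseteq> Tset \<or> (\<exists>e1 e2 l1 l2. Dcond e1 e2 l1 l2 \<and> M \<subseteq> Dset e1 e2 l1 l2)
     \<or> (\<exists>c. c \<noteq> 0 \<and> nilpotent2 c \<and> M \<subseteq> Nset c)"
proof (cases "\<forall>x\<in>M. trace x = 0")
  case True
  hence "M \<subseteq> Tset" unfolding Tset_def by blast
  thus ?thesis by (rule disjI1)
next
  case False
  then obtain u where uM: "u \<in> M" and tu: "trace u \<noteq> 0" by blast
  obtain al where al: "det u + (- trace u) * al + 1 * al^2 = 0" using quad_root[of "- trace u" 1 "det u"] by auto
  define be where "be = trace u - al"
  have h1: "al + be = trace u" by (simp add: be_def)
  have h2: "al * be = det u"
  proof -
    have "al * be = al * trace u - al^2" by (simp add: be_def algebra_simps power2_eq_square)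
    also have "\<dots> = det u" using al by (simp add: algebra_simps)
    finally show ?thesis .
  qed
  have du: "det u \<noteq> 0" using good(1)[OF sub av two uM tu] .
  show ?thesis
  proof (cases "al = be")
    case True
    hence "al + al = trace u" "al * al = det u" using h1 h2 by simp_all
    from nil_cover[OF sub av two uM tu this] show ?thesis by (rule disjI2[OF disjI2])
  next
    case False
    have h1': "be + al = trace u" and h2': "be * al = det u" using h1 h2 by (simp_all add: algebra_simps)
    from core_a_set[OF sub av two uM tu h1 h2] show ?thesis
    proof
      assume "\<forall>v\<in>M. trace v = 0 \<longrightarrow> Lrel u al be v"
      from diag_cover[OF sub uM tu h1 h2 False du this] show ?thesis by (rule disjI2[OF disjI1])
    next
      assume "\<forall>v\<in>M. trace v = 0 \<longrightarrow> Lrel u be al v"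
      have "be \<noteq> al" using False by simp
      from diag_cover[OF sub uM tu h1' h2' this du \<open>\<forall>v\<in>M. trace v = 0 \<longrightarrow> Lrel u be al v\<close>]
      show ?thesis by (rule disjI2[OF disjI1])
    qed
  qed
qed

lemma maxT:
  fixes M :: "'a::field mat2 set"
  assumes sub: "is_subspace2 M" and av: "avoid M" and two: "(2::'a) \<noteq> 0" and TM: "Tset \<subseteq> M"
  shows "M = Tset"
proof
  show "M \<subseteq> Tset"
  proof
    fix x assume xM: "x \<in> M"
    show "x \<in> Tset"
    proof (rule ccontr)
      assume "x \<notin> Tset"
      hence tx: "trace x \<noteq> 0" by (simp add: Tset_def)
      define y where "y = mat 1 - msmult (2 / trace x) x"
      have tm: "trace (mat 1 :: 'a mat2) = 2" by (simp add: ent)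
      have "trace y = 0" unfolding y_def using tx by (simp add: tr_diff tr_ms tm)
      hence "y \<in> M" using TM by (auto simp: Tset_def)
      hence "y + msmult (2 / trace x) x \<in> M" using sub xM by (intro sub_add sub_sm)
      hence "mat 1 \<in> M" by (simp add: y_def)
      thus False using av mat1_idem mat1_nz unfolding avoid_def by blast
    qed
  qed
  show "Tset \<subseteq> M" by (rule TM)
qed

lemma nzsand:
  fixes e1 e2 :: "'a::field mat2"
  assumes "e1 \<noteq> 0" "e2 \<noteq> 0"
  shows "\<exists>x. e1 ** x ** e2 \<noteq> 0"
proof -
  obtain i k where ik: "e1$i$k \<noteq> 0" using assms(1) by (auto simp: vec_eq_iff)
  obtain l j where lj: "e2$l$j \<noteq> 0" using assms(2) by (auto simp: vec_eq_iff)
  have "(e1 ** unit2 k l ** e2)$i$j \<noteq> 0" using ik lj by (simp add: unit_prod)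
  hence "e1 ** unit2 k l ** e2 \<noteq> 0" by auto
  thus ?thesis by blast
qed

lemma maxD:
  fixes M :: "'a::alg_closed_field mat2 set"
  assumes D: "Dcond e1 e2 l1 l2" and sub: "is_subspace2 M" and av: "avoid M" and two: "(2::'a) \<noteq> 0"
    and DM: "Dset e1 e2 l1 l2 \<subseteq> M"
  shows "M = Dset e1 e2 l1 l2"
proof
  define u where "u = msmult l1 e1 + msmult l2 e2"
  note F0 = Dfacts(1,2,7,8)[OF D, folded u_def]
  note Fx = Dfacts(3-6)[OF D, folded u_def]
  have ne: "l1 \<noteq> l2" and s0: "l1 + l2 \<noteq> 0" and n1: "e1 \<noteq> 0" and n2: "e2 \<noteq> 0"
    using D by (auto simp: Dcond_def)
  have "u = msmult 1 u + e1 ** 0 ** e2" by (simp add: ent)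
  hence "u \<in> Dset e1 e2 l1 l2" unfolding Dset_def u_def by blast
  hence uM: "u \<in> M" using DM by blast
  have tu: "trace u \<noteq> 0" using F0(1) s0 by simp
  have h1: "l1 + l2 = trace u" and h2: "l1 * l2 = det u" using F0 by simp_all
  have L: "\<forall>v\<in>M. trace v = 0 \<longrightarrow> Lrel u l1 l2 v"
  proof -
    from core_a_set[OF sub av two uM tu h1 h2] show ?thesis
    proof
      assume H: "\<forall>v\<in>M. trace v = 0 \<longrightarrow> Lrel u l2 l1 v"
      obtain x where xnz: "e1 ** x ** e2 \<noteq> 0" using nzsand[OF n1 n2] by blast
      have "e1 ** x ** e2 = msmult 0 u + e1 ** x ** e2" by simp
      hence "e1 ** x ** e2 \<in> Dset e1 e2 l1 l2" unfolding Dset_def u_def by blast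
      hence "e1 ** x ** e2 \<in> M" using DM by blast
      hence "Lrel u l2 l1 (e1 ** x ** e2)" using H Fx(3)[of x] by blast
      hence "msmult l2 (e1 ** x ** e2) = msmult l1 (e1 ** x ** e2)" using Fx(1)[of x] by (simp add: Lrel_def)
      hence "e1 ** x ** e2 = 0" using ne unfolding meq by (auto simp: ent)
      thus ?thesis using xnz by simp
    qed simp
  qed
  show "M \<subseteq> Dset e1 e2 l1 l2"
  proof
    fix m assume mM: "m \<in> M"
    define t where "t = trace m / trace u"
    define v where "v = m - msmult t u"
    have vM: "v \<in> M" "trace v = 0" using decomp[OF sub uM tu mM] by (simp_all add: v_def t_def)
    have sw: "Eproj u l1 l2 ** v ** Eproj u l2 l1 = v" using sandwich_eq[OF _ ne] L vM by blast
    hence "m = msmult t u + e1 ** v ** e2" using F0(3,4) v_def by simp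
    thus "m \<in> Dset e1 e2 l1 l2" unfolding Dset_def u_def by blast
  qed
  show "Dset e1 e2 l1 l2 \<subseteq> M" by (rule DM)
qed

lemma maxN:
  fixes M :: "'a::alg_closed_field mat2 set"
  assumes nz: "c \<noteq> 0" and np: "nilpotent2 c" and sub: "is_subspace2 M" and av: "avoid M"
    and two: "(2::'a) \<noteq> 0" and NM: "Nset c \<subseteq> M"
  shows "M = Nset c"
proof
  note P = nilp_props[OF nz np]
  define u where "u = mat 1 + c"
  have "u \<in> Nset c" unfolding Nset_def u_def by (rule CollectI, rule exI[of _ 1]) simp
  hence uM: "u \<in> M" using NM by blast
  have tm: "trace (mat 1 :: 'a mat2) = 2" by (simp add: ent)
  have tu2: "trace u = 2" unfolding u_def using P by (simp add: tr_add tm)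
  hence tu: "trace u \<noteq> 0" using two by simp
  have h1: "1 + 1 = trace u" using tu2 by simp
  have h2: "1 * 1 = det u" unfolding u_def using P by (simp add: det_I_plus)
  show "M \<subseteq> Nset c"
  proof
    fix m assume mM: "m \<in> M"
    define t where "t = trace m / trace u"
    define v where "v = m - msmult t u"
    have vM: "v \<in> M" "trace v = 0" using decomp[OF sub uM tu mM] by (simp_all add: v_def t_def)
    have v0: "v = 0" using core_b[OF sub av two uM tu h1 h2 vM] .
    hence "m = msmult t (mat 1 + c)" using v_def u_def by simp
    thus "m \<in> Nset c" unfolding Nset_def by blast
  qed
  show "Nset c \<subseteq> M" by (rule NM)
qed



theorem theorem3p5:
  fixes M :: "('a::alg_closed_field) mat2 set"
  assumes char: "(2::'a) \<noteq> 0"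
  shows "maximal_mathieu_subspace2 M \<longleftrightarrow>
    (M = {b. trace b = 0}
     \<or> (\<exists>e1 e2 l1 l2. idempotent2 e1 \<and> idempotent2 e2 \<and> e1 \<noteq> 0 \<and> e2 \<noteq> 0 \<and>
          e1 + e2 = mat 1 \<and> l1 \<noteq> l2 \<and> l1 \<noteq> 0 \<and> l2 \<noteq> 0 \<and> l1 + l2 \<noteq> 0 \<and>
          M = {msmult t (msmult l1 e1 + msmult l2 e2) + e1 ** x ** e2 | t x. True})
     \<or> (\<exists>c. c \<noteq> 0 \<and> nilpotent2 c \<and> M = {msmult t (mat 1 + c) | t. True}))"
  (is "?L \<longleftrightarrow> ?R")
proof
  assume ?L
  hence sub: "is_subspace2 M" and av: "avoid M"
    and mx: "\<forall>M'. is_subspace2 M' \<and> avoid M' \<and> M \<subseteq> M' \<longrightarrow> M' = M"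
    using max_iff[OF char] by blast+
  from cover[OF sub av char] show ?R
  proof (elim disjE exE conjE)
    assume "M \<subseteq> Tset"
    hence "Tset = M" using mx Tsub Tavoid[OF char] by blast
    thus ?R by (intro disjI1) (simp add: Tset_def)
  next
    fix e1 e2 l1 l2 assume D: "Dcond e1 e2 l1 l2" and MD: "M \<subseteq> Dset e1 e2 l1 l2"
    hence eq: "Dset e1 e2 l1 l2 = M" using mx Dsub Davoid[OF D char] by blast
    show ?R
      apply (rule disjI2, rule disjI1)
      apply (rule exI[of _ e1], rule exI[of _ e2], rule exI[of _ l1], rule exI[of _ l2])
      using D eq by (simp add: Dcond_def Dset_def)
  next
    fix c assume nz: "c \<noteq> 0" and np: "nilpotent2 c" and MN: "M \<subseteq> Nset c"
    hence eq: "Nset c = M" using mx Nsub Navoid[OF nz np char] by blast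
    show ?R
      apply (rule disjI2, rule disjI2)
      apply (rule exI[of _ c])
      using nz np eq by (simp add: Nset_def)
  qed
next
  assume ?R
  thus ?L unfolding max_iff[OF char]
  proof (elim disjE exE conjE)
    assume "M = {b. trace b = 0}"
    hence eq: "M = Tset" by (simp add: Tset_def)
    show "is_subspace2 M \<and> avoid M \<and> (\<forall>M'. is_subspace2 M' \<and> avoid M' \<and> M \<subseteq> M' \<longrightarrow> M' = M)"
      unfolding eq using Tsub Tavoid[OF char] maxT[OF _ _ char] by blast
  next
    fix e1 e2 l1 l2
    assume a: "idempotent2 e1" "idempotent2 e2" "e1 \<noteq> 0" "e2 \<noteq> 0" "e1 + e2 = mat 1" "l1 \<noteq> l2"
      "l1 \<noteq> 0" "l2 \<noteq> 0" "l1 + l2 \<noteq> 0"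
      and m: "M = {msmult t (msmult l1 e1 + msmult l2 e2) + e1 ** x ** e2 | t x. True}"
    have D: "Dcond e1 e2 l1 l2" using a by (simp add: Dcond_def)
    have eq: "M = Dset e1 e2 l1 l2" using m by (simp add: Dset_def)
    show "is_subspace2 M \<and> avoid M \<and> (\<forall>M'. is_subspace2 M' \<and> avoid M' \<and> M \<subseteq> M' \<longrightarrow> M' = M)"
      unfolding eq using Dsub Davoid[OF D char] maxD[OF D _ _ char] by blast
  next
    fix c assume nz: "c \<noteq> 0" and np: "nilpotent2 c" and m: "M = {msmult t (mat 1 + c) | t. True}"
    have eq: "M = Nset c" using m by (simp add: Nset_def)
    show "is_subspace2 M \<and> avoid M \<and> (\<forall>M'. is_subspace2 M' \<and> avoid M' \<and> M \<subseteq> M' \<longrightarrow> M' = M)"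
      unfolding eq using Nsub Navoid[OF nz np char] maxN[OF nz np _ _ char] by blast
  qed
qed


end
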